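(* For a threshold graph $G$ and an integer $d\ge0$, $\mathrm{degen}(G)=d$ if and only if $\mathrm{seq}(G)$ contains exactly $d$ ones.
   Context: A threshold graph on $n\ge1$ vertices is built from a base vertex $v_0$ by successively adding $v_1,\dots,v_{n-1}$, each either isolated (adjacent to no earlier vertex) or dominating (adjacent to all earlier vertices); its creation sequence $\mathrm{seq}(G)=s_1\cdots s_{n-1}$ has $s_i=1$ if $v_i$ is dominating and $s_i=0$ otherwise. The degeneracy $\mathrm{degen}(G)$ is the maximum over nonempty induced subgraphs $H$ of $G$ of the minimum degree of $H$. *)

theory Defs
  imports Main
begin

definition simple_graph :: "'a set \<Rightarrow> ('a \<Rightarrow> 'a \<Rightarrow> bool) \<Rightarrow> bool" where
  "simple_graph V E \<longleftrightarrow> finite V \<and> (\<forall>u v. E u v \<longrightarrow> u \<in> V \<and> v \<in> V)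
     \<and> (\<forall>u v. E u v \<longrightarrow> E v u) \<and> (\<forall>v. \<not> E v v)"

definition deg_in :: "('a \<Rightarrow> 'a \<Rightarrow> bool) \<Rightarrow> 'a set \<Rightarrow> 'a \<Rightarrow> nat" where
  "deg_in E S v = card {u \<in> S. E v u}"

definition degen :: "'a set \<Rightarrow> ('a \<Rightarrow> 'a \<Rightarrow> bool) \<Rightarrow> nat" where
  "degen V E = Max {Min (deg_in E S ` S) | S. S \<subseteq> V \<and> S \<noteq> {}}"

text \<open>vs = [v_0, ..., v_{n-1}] is a construction order of the graph (V,E) as a threshold
  graph with creation sequence s = s_1 ... s_{n-1} (stored as s!0 ... s!(n-2)), entries in {0,1}:
  v_j (j \<ge> 1) is adjacent to every earlier vertex if s_j = 1 and to none if s_j = 0.\<close>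
definition threshold_construction ::
  "'a set \<Rightarrow> ('a \<Rightarrow> 'a \<Rightarrow> bool) \<Rightarrow> 'a list \<Rightarrow> nat list \<Rightarrow> bool" where
  "threshold_construction V E vs s \<longleftrightarrow>
     simple_graph V E \<and> distinct vs \<and> set vs = V \<and> length vs \<ge> 1
     \<and> length s = length vs - 1 \<and> set s \<subseteq> {0, 1}
     \<and> (\<forall>i j. i < j \<and> j < length vs \<longrightarrow> (E (vs ! i) (vs ! j) \<longleftrightarrow> s ! (j - 1) = 1))"

end

theory Submission
  imports Defs
begin

theorem mainTheorem12:
  fixes V :: "'a set" and E :: "'a \<Rightarrow> 'a \<Rightarrow> bool" and vs :: "'a list"
    and s :: "nat list" and d :: nat
  assumes "threshold_construction V E vs s"
  shows "degen V E = d \<longleftrightarrow> count_list s 1 = d"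
proof -
  let ?n = "length vs"
  define D where "D = {j. 1 \<le> j \<and> j < ?n \<and> s ! (j - 1) = 1}"
  define k where "k = count_list s 1"
  note A = assms[unfolded threshold_construction_def simple_graph_def]
  have fin: "finite V" and symE: "\<And>u v. E u v \<Longrightarrow> E v u" and irr: "\<And>v. \<not> E v v"
    and dist: "distinct vs" and setv: "set vs = V" and n1: "?n \<ge> 1"
    and ls: "length s = ?n - 1"
    and adj: "\<And>i j. i < j \<Longrightarrow> j < ?n \<Longrightarrow> E (vs ! i) (vs ! j) \<longleftrightarrow> s ! (j - 1) = 1"
    using A by auto
  have kD: "card D = k"
  proof -
    have "k = card {i. i < length s \<and> s ! i = 1}"
      unfolding k_def count_list_eq_length_filter length_filter_conv_card by metis
    also have "{i. i < length s \<and> s ! i = 1} = (\<lambda>j. j - 1) ` D"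
    proof (rule set_eqI, rule iffI)
      fix i assume "i \<in> {i. i < length s \<and> s ! i = 1}"
      then have "Suc i \<in> D" "i = Suc i - 1" using ls unfolding D_def by auto
      then show "i \<in> (\<lambda>j. j - 1) ` D" by blast
    qed (auto simp: D_def ls)
    also have "card \<dots> = card D"
      by (rule card_image) (auto simp: D_def inj_on_def)
    finally show ?thesis by simp
  qed
  have finD: "finite D" unfolding D_def by auto
  let ?M = "{Min (deg_in E S ` S) | S. S \<subseteq> V \<and> S \<noteq> {}}"
  have upper: "m \<le> k" if mM: "m \<in> ?M" for m
  proof -
    obtain S where S: "S \<subseteq> V" "S \<noteq> {}" "m = Min (deg_in E S ` S)" using mM by blast
    have finS: "finite S" using S fin finite_subset by blast
    let ?I = "{i. i < ?n \<and> vs ! i \<in> S}"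
    have Ine: "?I \<noteq> {}"
    proof -
      obtain x where "x \<in> S" using S by auto
      then have "x \<in> set vs" using S setv by auto
      then obtain i where "i < ?n" "vs ! i = x" by (auto simp: in_set_conv_nth)
      then show ?thesis using \<open>x \<in> S\<close> by auto
    qed
    define i0 where "i0 = Min ?I"
    have i0I: "i0 \<in> ?I" unfolding i0_def by (rule Min_in) (use Ine in auto)
    have i0min: "\<And>j. j \<in> ?I \<Longrightarrow> i0 \<le> j" unfolding i0_def by (rule Min_le) auto
    have sub: "{w \<in> S. E (vs ! i0) w} \<subseteq> (\<lambda>j. vs ! j) ` D"
    proof
      fix w assume w: "w \<in> {w \<in> S. E (vs ! i0) w}"
      then have "w \<in> set vs" using S setv by auto
      then obtain j where j: "j < ?n" "w = vs ! j" by (metis in_set_conv_nth)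
      have "i0 \<le> j" using i0min j w by auto
      moreover have "i0 \<noteq> j" using w j irr by auto
      ultimately have "i0 < j" by simp
      then have "s ! (j - 1) = 1" using adj j w by auto
      then have "j \<in> D" using \<open>i0 < j\<close> j unfolding D_def by auto
      then show "w \<in> (\<lambda>j. vs ! j) ` D" using j by blast
    qed
    have "m \<le> deg_in E S (vs ! i0)" unfolding S(3) using i0I finS by auto
    also have "\<dots> \<le> card ((\<lambda>j. vs ! j) ` D)" unfolding deg_in_def
      by (rule card_mono[OF _ sub]) (use finD in auto)
    also have "\<dots> \<le> card D" by (rule card_image_le[OF finD])
    finally show ?thesis using kD by simp
  qed
  define T where "T = insert 0 D"
  define S where "S = (\<lambda>j. vs ! j) ` T"
  have Tn: "\<And>j. j \<in> T \<Longrightarrow> j < ?n" using n1 unfolding T_def D_def by auto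
  have injT: "inj_on (\<lambda>j. vs ! j) T" using dist Tn by (auto simp: inj_on_def nth_eq_iff_index_eq)
  have finT: "finite T" using finD T_def by auto
  have cT: "card T = k + 1" using kD finD unfolding T_def D_def by auto
  have SV: "S \<subseteq> V" using Tn setv unfolding S_def by auto
  have Sne: "S \<noteq> {}" unfolding S_def T_def by auto
  have degS: "deg_in E S x = k" if xS: "x \<in> S" for x
  proof -
    obtain a where a: "a \<in> T" "x = vs ! a" using xS S_def by auto
    have "{w \<in> S. E x w} = (\<lambda>j. vs ! j) ` (T - {a})"
    proof (rule set_eqI, rule iffI)
      fix w assume "w \<in> {w \<in> S. E x w}"
      then obtain b where b: "b \<in> T" "w = vs ! b" "E x w" unfolding S_def by auto
      have "b \<noteq> a" using b a irr by auto
      then show "w \<in> (\<lambda>j. vs ! j) ` (T - {a})" using b by auto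
    next
      fix w assume "w \<in> (\<lambda>j. vs ! j) ` (T - {a})"
      then obtain b where b: "b \<in> T" "b \<noteq> a" "w = vs ! b" by auto
      have "E (vs ! a) (vs ! b)"
      proof (cases "a < b")
        case True
        then have "b \<in> D" using b T_def by auto
        then show ?thesis using adj[OF True Tn[OF b(1)]] D_def by auto
      next
        case False
        then have ba: "b < a" using b by auto
        then have "a \<in> D" using a T_def by auto
        then show ?thesis using adj[OF ba Tn[OF a(1)]] D_def symE by auto
      qed
      then show "w \<in> {w \<in> S. E x w}" using a b S_def by auto
    qed
    then have "deg_in E S x = card ((\<lambda>j. vs ! j) ` (T - {a}))" unfolding deg_in_def by simp
    also have "\<dots> = card (T - {a})" by (rule card_image) (use injT in \<open>auto simp: inj_on_def\<close>)
    also have "\<dots> = k" using cT a finT by simp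
    finally show ?thesis .
  qed
  have "deg_in E S ` S = {k}" using degS Sne by auto
  then have "k = Min (deg_in E S ` S)" by simp
  then have kM: "k \<in> ?M" using SV Sne by blast
  have finM: "finite ?M" by (rule finite_subset[of _ "{..k}"]) (use upper in auto)
  have "degen V E = k" unfolding degen_def by (rule Max_eqI[OF finM upper kM])
  then show ?thesis using k_def by simp
qed

end
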